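(* Let $\mathcal{X}$ be a totally ordered set equipped with a $\sigma$-algebra $\mathcal{F}$, let $n\ge 1$, and let $\mathcal{S}_{n,\bm{\nu}}$ be the set of labelings $\sigma:\{1,\dots,n\}\to\{1,\dots,K\}$ with $|\sigma^{-1}(k)|=n\nu_k$ for each $k$, for a fixed vector of group proportions $\bm{\nu}=(\nu_1,\dots,\nu_K)$. For $\theta\in\{0,1\}$ and $k\in\{1,\dots,K\}$ let $P_{\theta,k}$ be probability measures on $(\mathcal{X},\mathcal{F})$ with densities $p_{\theta,k}$ with respect to a common $\sigma$-finite measure (probability mass functions in the discrete case), and for $\sigma\in\mathcal{S}_{n,\bm{\nu}}$ let $\mathbb{P}_{\theta;\sigma}=\bigotimes_{i=1}^n P_{\theta,\sigma(i)}$ on $(\mathcal{X}^n,\mathcal{F}^{\otimes n})$, with density $\mathbb{P}_{\theta;\sigma}(x^n)=\prod_{i=1}^n p_{\theta,\sigma(i)}(x_i)$. Consider the composite (anonymous) hypothesis testing problem $\mathcal{H}_\theta: X^n\sim \mathbb{P}_{\theta;\sigma}$ for some unknown $\sigma\in\mathcal{S}_{n,\bm{\nu}}$, $\theta\in\{0,1\}$. For a test $\phi:\mathcal{X}^n\to[0,1]$ define $\mathsf{P_F}(\phi)=\max_{\sigma\in\mathcal{S}_{n,\bm{\nu}}}\mathbb{E}_{\mathbb{P}_{0;\sigma}}[\phi(X^n)]$ and $\mathsf{P_M}(\phi)=\max_{\sigma\in\mathcal{S}_{n,\bm{\nu}}}\mathbb{E}_{\mathbb{P}_{1;\sigma}}[1-\phi(X^n)]$.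 Define the mixture likelihood ratio $\ell(x^n)=\frac{\sum_{\sigma\in\mathcal{S}_{n,\bm{\nu}}}\mathbb{P}_{1;\sigma}(x^n)}{\sum_{\sigma\in\mathcal{S}_{n,\bm{\nu}}}\mathbb{P}_{0;\sigma}(x^n)}$ and, for a threshold $\tau\ge 0$ and $\gamma\in[0,1]$, the mixture likelihood ratio test $\phi^*(x^n)=1$ if $\ell(x^n)>\tau$, $\phi^*(x^n)=\gamma$ if $\ell(x^n)=\tau$, $\phi^*(x^n)=0$ if $\ell(x^n)<\tau$. Then among all symmetric tests, $\phi^*$ is optimal: for every symmetric test $\phi$ with $\mathsf{P_F}(\phi)\le \mathsf{P_F}(\phi^* )$ one has $\mathsf{P_M}(\phi)\ge \mathsf{P_M}(\phi^* )$.
   Context: The ordering map $\Pi:\mathcal{X}^n\to\tilde{\mathcal{X}}^n$, where $\tilde{\mathcal{X}}^n=\{x^n\in\mathcal{X}^n: x_1\ge x_2\ge\dots\ge x_n\}$ with $\sigma$-algebra $\tilde{\mathcal{F}}=\mathcal{F}^{\otimes n}\cap\tilde{\mathcal{X}}^n$, sends $x^n$ to the rearrangement $(x_{i_1},\dots,x_{i_n})$ of its coordinates with $x_{i_1}\ge\dots\ge x_{i_n}$. A test $\phi:\mathcal{X}^n\to[0,1]$ is called symmetric if $\phi=\tilde{\phi}\circ\Pi$ for some measurable $\tilde{\phi}:\tilde{\mathcal{X}}^n\to[0,1]$, i.e. $\phi$ takes the same value on $x^n$ and all its coordinate permutations. Optimality is meant in the Neyman–Pearson sense with the worst-case (over $\sigma$)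 error probabilities defined in the claim. *)

theory Defs
  imports "HOL-Probability.Probability"
begin

definition labelings :: "nat \<Rightarrow> nat \<Rightarrow> (nat \<Rightarrow> real) \<Rightarrow> (nat \<Rightarrow> nat) set" where
  "labelings n K \<nu> = {\<sigma> \<in> {1..n} \<rightarrow>\<^sub>E {1..K}.
      \<forall>k\<in>{1..K}. real (card {i\<in>{1..n}. \<sigma> i = k}) = real n * \<nu> k}"

abbreviation Xn :: "'a measure \<Rightarrow> nat \<Rightarrow> (nat \<Rightarrow> 'a) measure" where
  "Xn \<mu> n \<equiv> PiM {1..n} (\<lambda>_. \<mu>)"

definition Pk :: "'a measure \<Rightarrow> (nat \<Rightarrow> nat \<Rightarrow> 'a \<Rightarrow> real) \<Rightarrow> nat \<Rightarrow> nat \<Rightarrow> 'a measure" where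
  "Pk \<mu> p \<theta> k = density \<mu> (\<lambda>x. ennreal (p \<theta> k x))"

definition Pprod :: "'a measure \<Rightarrow> (nat \<Rightarrow> nat \<Rightarrow> 'a \<Rightarrow> real) \<Rightarrow> nat \<Rightarrow> nat \<Rightarrow> (nat \<Rightarrow> nat) \<Rightarrow> (nat \<Rightarrow> 'a) measure" where
  "Pprod \<mu> p n \<theta> \<sigma> = PiM {1..n} (\<lambda>i. Pk \<mu> p \<theta> (\<sigma> i))"

definition dens :: "(nat \<Rightarrow> nat \<Rightarrow> 'a \<Rightarrow> real) \<Rightarrow> nat \<Rightarrow> nat \<Rightarrow> (nat \<Rightarrow> nat) \<Rightarrow> (nat \<Rightarrow> 'a) \<Rightarrow> real" where
  "dens p n \<theta> \<sigma> x = (\<Prod>i\<in>{1..n}. p \<theta> (\<sigma> i) (x i))"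

definition PF :: "'a measure \<Rightarrow> (nat \<Rightarrow> nat \<Rightarrow> 'a \<Rightarrow> real) \<Rightarrow> nat \<Rightarrow> nat \<Rightarrow> (nat \<Rightarrow> real)
    \<Rightarrow> ((nat \<Rightarrow> 'a) \<Rightarrow> real) \<Rightarrow> real" where
  "PF \<mu> p n K \<nu> \<phi> = Max ((\<lambda>\<sigma>. integral\<^sup>L (Pprod \<mu> p n 0 \<sigma>) \<phi>) ` labelings n K \<nu>)"

definition PM :: "'a measure \<Rightarrow> (nat \<Rightarrow> nat \<Rightarrow> 'a \<Rightarrow> real) \<Rightarrow> nat \<Rightarrow> nat \<Rightarrow> (nat \<Rightarrow> real)
    \<Rightarrow> ((nat \<Rightarrow> 'a) \<Rightarrow> real) \<Rightarrow> real" where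
  "PM \<mu> p n K \<nu> \<phi> = Max ((\<lambda>\<sigma>. integral\<^sup>L (Pprod \<mu> p n 1 \<sigma>) (\<lambda>x. 1 - \<phi> x)) ` labelings n K \<nu>)"

text \<open>Mixture likelihood ratio, valued in [0,\<infinity>]: a/0 = \<infinity> for a > 0 (and 0/0 = 0).\<close>
definition mlr :: "(nat \<Rightarrow> nat \<Rightarrow> 'a \<Rightarrow> real) \<Rightarrow> nat \<Rightarrow> nat \<Rightarrow> (nat \<Rightarrow> real) \<Rightarrow> (nat \<Rightarrow> 'a) \<Rightarrow> ennreal" where
  "mlr p n K \<nu> x = ennreal (\<Sum>\<sigma>\<in>labelings n K \<nu>. dens p n 1 \<sigma> x)
                   / ennreal (\<Sum>\<sigma>\<in>labelings n K \<nu>. dens p n 0 \<sigma> x)"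

definition mlr_test :: "(nat \<Rightarrow> nat \<Rightarrow> 'a \<Rightarrow> real) \<Rightarrow> nat \<Rightarrow> nat \<Rightarrow> (nat \<Rightarrow> real) \<Rightarrow> real \<Rightarrow> real
    \<Rightarrow> (nat \<Rightarrow> 'a) \<Rightarrow> real" where
  "mlr_test p n K \<nu> \<tau> \<gamma> x =
     (if mlr p n K \<nu> x > ennreal \<tau> then 1
      else if mlr p n K \<nu> x = ennreal \<tau> then \<gamma> else 0)"

definition is_test :: "'a measure \<Rightarrow> nat \<Rightarrow> ((nat \<Rightarrow> 'a) \<Rightarrow> real) \<Rightarrow> bool" where
  "is_test \<mu> n \<phi> \<longleftrightarrow> \<phi> \<in> borel_measurable (Xn \<mu> n) \<and> (\<forall>x\<in>space (Xn \<mu> n). 0 \<le> \<phi> x \<and> \<phi> x \<le> 1)"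

definition ordmap :: "nat \<Rightarrow> (nat \<Rightarrow> 'a::linorder) \<Rightarrow> (nat \<Rightarrow> 'a)" where
  "ordmap n x = (\<lambda>i\<in>{1..n}. rev (sort (map x [1..<Suc n])) ! (i - 1))"

definition ordered_space :: "'a::linorder measure \<Rightarrow> nat \<Rightarrow> (nat \<Rightarrow> 'a) set" where
  "ordered_space \<mu> n = {x \<in> space (Xn \<mu> n). \<forall>i\<in>{1..n}. \<forall>j\<in>{1..n}. i \<le> j \<longrightarrow> x j \<le> x i}"

definition symmetric_test :: "'a::linorder measure \<Rightarrow> nat \<Rightarrow> ((nat \<Rightarrow> 'a) \<Rightarrow> real) \<Rightarrow> bool" where
  "symmetric_test \<mu> n \<phi> \<longleftrightarrow> is_test \<mu> n \<phi> \<and>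
     (\<exists>\<phi>t. \<phi>t \<in> borel_measurable (restrict_space (Xn \<mu> n) (ordered_space \<mu> n))
        \<and> (\<forall>y\<in>ordered_space \<mu> n. 0 \<le> \<phi>t y \<and> \<phi>t y \<le> 1)
        \<and> (\<forall>x\<in>space (Xn \<mu> n). \<phi> x = \<phi>t (ordmap n x)))"

end

theory Submission
  imports Defs
begin


lemma PiM_density:
  fixes g :: "nat \<Rightarrow> 'a \<Rightarrow> real"
  assumes sf: "sigma_finite_measure \<mu>" and fin: "finite I"
    and g: "\<And>i. i \<in> I \<Longrightarrow> g i \<in> borel_measurable \<mu>"
    and gnn: "\<And>i x. i \<in> I \<Longrightarrow> x \<in> space \<mu> \<Longrightarrow> 0 \<le> g i x"
    and ps: "\<And>i. i \<in> I \<Longrightarrow> prob_space (density \<mu> (\<lambda>x. ennreal (g i x)))"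
  shows "PiM I (\<lambda>i. density \<mu> (\<lambda>x. ennreal (g i x)))
       = density (PiM I (\<lambda>_. \<mu>)) (\<lambda>x. ennreal (\<Prod>i\<in>I. g i (x i)))"
proof -
  define M' where "M' i = (if i \<in> I then density \<mu> (\<lambda>x. ennreal (g i x)) else \<mu>)" for i
  interpret M': product_sigma_finite M'
    unfolding product_sigma_finite_def M'_def
    using ps sf by (auto simp: prob_space_imp_sigma_finite)
  interpret U: product_sigma_finite "\<lambda>_. \<mu>"
    unfolding product_sigma_finite_def using sf by auto
  have eqM: "PiM I (\<lambda>i. density \<mu> (\<lambda>x. ennreal (g i x))) = PiM I M'"
    by (rule PiM_cong) (auto simp: M'_def)
  have dm: "(\<lambda>x. ennreal (\<Prod>i\<in>I. g i (x i))) \<in> borel_measurable (PiM I (\<lambda>_. \<mu>))"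
    using g by (intro measurable_compose[OF _ measurable_ennreal] borel_measurable_prod)
      (auto intro: measurable_compose[OF measurable_component_singleton])
  have "density (PiM I (\<lambda>_. \<mu>)) (\<lambda>x. ennreal (\<Prod>i\<in>I. g i (x i))) = PiM I M'"
  proof (rule M'.PiM_eqI[OF fin])
    show "sets (density (PiM I (\<lambda>_. \<mu>)) (\<lambda>x. ennreal (\<Prod>i\<in>I. g i (x i)))) = sets (PiM I M')"
      by (auto intro!: sets_PiM_cong simp: M'_def)
    fix A assume A: "\<And>i. i \<in> I \<Longrightarrow> A i \<in> sets (M' i)"
    then have A': "\<And>i. i \<in> I \<Longrightarrow> A i \<in> sets \<mu>" by (auto simp: M'_def)
    have PA: "Pi\<^sub>E I A \<in> sets (PiM I (\<lambda>_. \<mu>))" using A' by (auto intro: sets_PiM_I_finite[OF fin])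
    have "emeasure (density (PiM I (\<lambda>_. \<mu>)) (\<lambda>x. ennreal (\<Prod>i\<in>I. g i (x i)))) (Pi\<^sub>E I A)
        = (\<integral>\<^sup>+ x. ennreal (\<Prod>i\<in>I. g i (x i)) * indicator (Pi\<^sub>E I A) x \<partial>PiM I (\<lambda>_. \<mu>))"
      by (rule emeasure_density[OF dm PA])
    also have "\<dots> = (\<integral>\<^sup>+ x. (\<Prod>i\<in>I. ennreal (g i (x i)) * indicator (A i) (x i)) \<partial>PiM I (\<lambda>_. \<mu>))"
    proof (rule nn_integral_cong)
      fix x assume x: "x \<in> space (PiM I (\<lambda>_. \<mu>))"
      then have xe: "x \<in> extensional I" and xs: "\<And>i. i \<in> I \<Longrightarrow> x i \<in> space \<mu>"
        by (auto simp: space_PiM PiE_def)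
      have "ennreal (\<Prod>i\<in>I. g i (x i)) = (\<Prod>i\<in>I. ennreal (g i (x i)))"
        using xs gnn by (simp add: prod_ennreal)
      moreover have "indicator (Pi\<^sub>E I A) x = (\<Prod>i\<in>I. indicator (A i) (x i) :: ennreal)"
      proof (cases "x \<in> Pi\<^sub>E I A")
        case True then show ?thesis by (auto simp: indicator_def PiE_def intro!: prod.neutral)
      next
        case False
        then obtain j where "j \<in> I" "x j \<notin> A j" using xe by (auto simp: PiE_def)
        then show ?thesis using False fin by (auto simp: indicator_def intro!: prod_zero[symmetric] bexI[of _ j])
      qed
      ultimately show "ennreal (\<Prod>i\<in>I. g i (x i)) * indicator (Pi\<^sub>E I A) x
          = (\<Prod>i\<in>I. ennreal (g i (x i)) * indicator (A i) (x i))"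
        by (simp add: prod.distrib)
    qed
    also have "\<dots> = (\<Prod>i\<in>I. \<integral>\<^sup>+ y. ennreal (g i y) * indicator (A i) y \<partial>\<mu>)"
      using g A' by (intro U.product_nn_integral_prod[OF fin]) auto
    also have "\<dots> = (\<Prod>i\<in>I. emeasure (M' i) (A i))"
      using g A' by (intro prod.cong refl) (auto simp: M'_def emeasure_density)
    finally show "emeasure (density (PiM I (\<lambda>_. \<mu>)) (\<lambda>x. ennreal (\<Prod>i\<in>I. g i (x i)))) (Pi\<^sub>E I A)
        = (\<Prod>i\<in>I. emeasure (M' i) (A i))" .
  qed
  with eqM show ?thesis by simp
qed



lemma labelings_finite: "finite (labelings n K \<nu>)"
proof -
  have "labelings n K \<nu> \<subseteq> {1..n} \<rightarrow>\<^sub>E {1..K}" by (auto simp: labelings_def)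
  then show ?thesis by (rule finite_subset) (simp add: finite_PiE)
qed

definition Tp :: "nat \<Rightarrow> (nat \<Rightarrow> nat) \<Rightarrow> (nat \<Rightarrow> 'b) \<Rightarrow> (nat \<Rightarrow> 'b)" where
  "Tp n \<pi> x = (\<lambda>i\<in>{1..n}. x (\<pi> i))"

lemma card_fiber_perm:
  assumes "bij_betw \<pi> {1..n} {1..n}"
  shows "card {i\<in>{1..n}. \<sigma> (\<pi> i) = k} = card {i\<in>{1..n}. \<sigma> i = k}"
proof -
  have "bij_betw \<pi> {i\<in>{1..n}. \<sigma> (\<pi> i) = k} {i\<in>{1..n}. \<sigma> i = k}"
  proof -
    have "bij_betw \<pi> {i\<in>{1..n}. \<sigma> (\<pi> i) = k} (\<pi> ` {i\<in>{1..n}. \<sigma> (\<pi> i) = k})"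
      using assms by (rule bij_betw_subset) auto
    moreover have "\<pi> ` {i\<in>{1..n}. \<sigma> (\<pi> i) = k} = {i\<in>{1..n}. \<sigma> i = k}"
    proof
      have "\<pi> i \<in> {1..n}" if "i \<in> {1..n}" for i using assms that by (metis bij_betw_apply)
      then show "\<pi> ` {i\<in>{1..n}. \<sigma> (\<pi> i) = k} \<subseteq> {i\<in>{1..n}. \<sigma> i = k}" by blast
      show "{i\<in>{1..n}. \<sigma> i = k} \<subseteq> \<pi> ` {i\<in>{1..n}. \<sigma> (\<pi> i) = k}"
      proof
        fix j assume j: "j \<in> {i\<in>{1..n}. \<sigma> i = k}"
        then obtain i where "i \<in> {1..n}" "\<pi> i = j" using assms
          by (metis (no_types, lifting) bij_betw_def imageE mem_Collect_eq)
        then show "j \<in> \<pi> ` {i\<in>{1..n}. \<sigma> (\<pi> i) = k}" using j by blast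
      qed
    qed
    ultimately show ?thesis by simp
  qed
  then show ?thesis by (rule bij_betw_same_card)
qed

lemma labelings_perm:
  assumes "\<sigma> \<in> labelings n K \<nu>" "bij_betw \<pi> {1..n} {1..n}"
  shows "Tp n \<pi> \<sigma> \<in> labelings n K \<nu>"
proof -
  have "\<pi> i \<in> {1..n}" if "i \<in> {1..n}" for i using assms(2) that by (auto simp: bij_betw_def)
  moreover have "{i\<in>{1..n}. Tp n \<pi> \<sigma> i = k} = {i\<in>{1..n}. \<sigma> (\<pi> i) = k}" for k
    by (auto simp: Tp_def)
  moreover have "Tp n \<pi> \<sigma> \<in> {1..n} \<rightarrow>\<^sub>E {1..K}"
  proof -
    have sP: "\<sigma> \<in> {1..n} \<rightarrow>\<^sub>E {1..K}" using assms(1) unfolding labelings_def by blast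
    have "\<sigma> (\<pi> i) \<in> {1..K}" if "i \<in> {1..n}" for i
      using PiE_mem[OF sP calculation(1)[OF that]] .
    then show ?thesis unfolding Tp_def by (simp add: restrict_PiE_iff)
  qed
  ultimately show ?thesis using assms card_fiber_perm[OF assms(2), of \<sigma>]
    unfolding labelings_def by simp
qed

lemma labelings_trans:
  assumes s: "\<sigma> \<in> labelings n K \<nu>" and s': "\<sigma>' \<in> labelings n K \<nu>"
  shows "\<exists>\<pi>. bij_betw \<pi> {1..n} {1..n} \<and> \<sigma>' = Tp n \<pi> \<sigma>"
proof -
  define A where "A k = {i\<in>{1..n}. \<sigma>' i = k}" for k
  define B where "B k = {i\<in>{1..n}. \<sigma> i = k}" for k
  have sP: "\<sigma> \<in> {1..n} \<rightarrow>\<^sub>E {1..K}" and sC: "\<forall>k\<in>{1..K}. real (card {i\<in>{1..n}. \<sigma> i = k}) = real n * \<nu> k"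
    using s unfolding labelings_def by blast+
  have s'P: "\<sigma>' \<in> {1..n} \<rightarrow>\<^sub>E {1..K}" and s'C: "\<forall>k\<in>{1..K}. real (card {i\<in>{1..n}. \<sigma>' i = k}) = real n * \<nu> k"
    using s' unfolding labelings_def by blast+
  have hex: "\<forall>k\<in>{1..K}. \<exists>h. bij_betw h (A k) (B k)"
  proof
    fix k assume k: "k \<in> {1..K}"
    have "real (card (A k)) = real (card (B k))"
      using sC s'C k unfolding A_def B_def by simp
    then have "card (A k) = card (B k)" by simp
    then show "\<exists>h. bij_betw h (A k) (B k)"
      by (intro finite_same_card_bij) (auto simp: A_def B_def)
  qed
  obtain h where h': "\<forall>k\<in>{1..K}. bij_betw (h k) (A k) (B k)" using bchoice[OF hex] by blast
  then have h: "\<And>k. k \<in> {1..K} \<Longrightarrow> bij_betw (h k) (A k) (B k)" by blast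
  define \<pi> where "\<pi> i = h (\<sigma>' i) i" for i
  have s'r: "\<sigma>' i \<in> {1..K}" if "i \<in> {1..n}" for i using PiE_mem[OF s'P that] .
  have piA: "\<pi> i \<in> B (\<sigma>' i)" if "i \<in> {1..n}" for i
    using bij_betw_apply[OF h[OF s'r[OF that]]] that by (simp add: \<pi>_def A_def)
  have sub: "\<pi> ` {1..n} \<subseteq> {1..n}" using piA by (auto simp: B_def)
  have sig: "\<sigma> (\<pi> i) = \<sigma>' i" if "i \<in> {1..n}" for i using piA[OF that] by (auto simp: B_def)
  have inj: "inj_on \<pi> {1..n}"
  proof (rule inj_onI)
    fix i j assume ij: "i \<in> {1..n}" "j \<in> {1..n}" "\<pi> i = \<pi> j"
    then have "\<sigma>' i = \<sigma>' j" using sig by metis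
    then have iA: "i \<in> A (\<sigma>' i)" "j \<in> A (\<sigma>' i)" using ij by (auto simp: A_def)
    have "inj_on (h (\<sigma>' i)) (A (\<sigma>' i))" using h[OF s'r[OF ij(1)]] by (simp add: bij_betw_def)
    moreover have "h (\<sigma>' i) i = h (\<sigma>' i) j" using ij(3) \<open>\<sigma>' i = \<sigma>' j\<close> by (simp add: \<pi>_def)
    ultimately show "i = j" using iA by (meson inj_onD)
  qed
  have bij: "bij_betw \<pi> {1..n} {1..n}"
    using endo_inj_surj[OF _ sub inj] inj by (auto simp: bij_betw_def)
  have "\<sigma>' = Tp n \<pi> \<sigma>"
  proof
    fix i show "\<sigma>' i = Tp n \<pi> \<sigma> i"
    proof -
      have ext: "\<sigma>' \<in> extensional {1..n}" using s'P by (simp add: PiE_def)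
      show ?thesis
      proof (cases "i \<in> {1..n}")
        case True then show ?thesis by (simp add: Tp_def sig)
      next
        case False
        have "\<sigma>' i = undefined" using extensional_arb[OF ext False] .
        moreover have "Tp n \<pi> \<sigma> i = undefined" using False unfolding Tp_def restrict_def by (simp only: if_False)
        ultimately show ?thesis by (rule trans[OF _ sym])
      qed
    qed
  qed
  with bij show ?thesis by (intro exI[of _ \<pi>] conjI)
qed

lemma Tp_bij_labelings:
  assumes "bij_betw \<pi> {1..n} {1..n}"
  shows "bij_betw (Tp n \<pi>) (labelings n K \<nu>) (labelings n K \<nu>)"
proof -
  have sub: "Tp n \<pi> ` labelings n K \<nu> \<subseteq> labelings n K \<nu>" using labelings_perm[OF _ assms] by auto
  have inj: "inj_on (Tp n \<pi>) (labelings n K \<nu>)"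
  proof (rule inj_onI)
    fix s1 s2 assume s: "s1 \<in> labelings n K \<nu>" "s2 \<in> labelings n K \<nu>" "Tp n \<pi> s1 = Tp n \<pi> s2"
    show "s1 = s2"
    proof
      fix j show "s1 j = s2 j"
      proof (cases "j \<in> {1..n}")
        case True
        then obtain i where i: "i \<in> {1..n}" "\<pi> i = j" using assms by (metis bij_betw_def imageE)
        have "Tp n \<pi> s1 i = Tp n \<pi> s2 i" using s by simp
        then show ?thesis using i by (simp add: Tp_def)
      next
        case False then show ?thesis using s by (auto simp: labelings_def PiE_def extensional_def)
      qed
    qed
  qed
  show ?thesis using endo_inj_surj[OF labelings_finite sub inj] inj by (simp add: bij_betw_def)
qed

lemma dens_Tp:
  assumes "bij_betw \<pi> {1..n} {1..n}"
  shows "dens p n \<theta> (Tp n \<pi> \<sigma>) (Tp n \<pi> x) = dens p n \<theta> \<sigma> x"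
proof -
  have "dens p n \<theta> (Tp n \<pi> \<sigma>) (Tp n \<pi> x) = (\<Prod>i\<in>{1..n}. (\<lambda>j. p \<theta> (\<sigma> j) (x j)) (\<pi> i))"
    unfolding dens_def Tp_def by (intro prod.cong) auto
  also have "\<dots> = dens p n \<theta> \<sigma> x"
    unfolding dens_def using prod.reindex_bij_betw[OF assms, of "\<lambda>j. p \<theta> (\<sigma> j) (x j)"] by simp
  finally show ?thesis .
qed

lemma sumdens_Tp:
  assumes "bij_betw \<pi> {1..n} {1..n}"
  shows "(\<Sum>\<sigma>\<in>labelings n K \<nu>. dens p n \<theta> \<sigma> (Tp n \<pi> x)) = (\<Sum>\<sigma>\<in>labelings n K \<nu>. dens p n \<theta> \<sigma> x)"
proof -
  have "(\<Sum>\<sigma>\<in>labelings n K \<nu>. dens p n \<theta> \<sigma> (Tp n \<pi> x))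
      = (\<Sum>\<sigma>\<in>labelings n K \<nu>. dens p n \<theta> (Tp n \<pi> \<sigma>) (Tp n \<pi> x))"
    using sum.reindex_bij_betw[OF Tp_bij_labelings[OF assms], of "\<lambda>\<sigma>. dens p n \<theta> \<sigma> (Tp n \<pi> x)"]
    by simp
  also have "\<dots> = (\<Sum>\<sigma>\<in>labelings n K \<nu>. dens p n \<theta> \<sigma> x)" by (simp add: dens_Tp[OF assms])
  finally show ?thesis .
qed

lemma mlr_test_Tp:
  assumes "bij_betw \<pi> {1..n} {1..n}"
  shows "mlr_test p n K \<nu> \<tau> \<gamma> (Tp n \<pi> x) = mlr_test p n K \<nu> \<tau> \<gamma> x"
  unfolding mlr_test_def mlr_def sumdens_Tp[OF assms] ..

lemma ordmap_Tp:
  assumes "bij_betw \<pi> {1..n} {1..n}"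
  shows "ordmap n (Tp n \<pi> x) = ordmap n x"
proof -
  have "map (Tp n \<pi> x) [1..<Suc n] = map x (map \<pi> [1..<Suc n])"
    by (auto simp: Tp_def)
  moreover have se: "set [1..<Suc n] = {1..n}" by auto
  moreover have "mset (map \<pi> [1..<Suc n]) = mset [1..<Suc n]"
  proof (rule set_eq_iff_mset_eq_distinct[THEN iffD1])
    show "distinct (map \<pi> [1..<Suc n])" using assms
      by (simp only: distinct_map se) (simp add: bij_betw_def)
    show "distinct [1..<Suc n]" by simp
    show "set (map \<pi> [1..<Suc n]) = set [1..<Suc n]" using assms
      by (simp only: set_map se) (simp add: bij_betw_def)
  qed
  ultimately have "mset (map (Tp n \<pi> x) [1..<Suc n]) = mset (map x [1..<Suc n])"
    by (metis mset_map)
  then have "sort (map (Tp n \<pi> x) [1..<Suc n]) = sort (map x [1..<Suc n])"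
    by (intro properties_for_sort) simp_all
  then show ?thesis unfolding ordmap_def by (simp only:)
qed



lemma lab_range: "\<sigma> \<in> labelings n K \<nu> \<Longrightarrow> i \<in> {1..n} \<Longrightarrow> \<sigma> i \<in> {1..K}"
  unfolding labelings_def by (blast intro: PiE_mem)

lemma sets_Pprod: "sets (Pprod \<mu> p n \<theta> \<sigma>) = sets (Xn \<mu> n)"
  unfolding Pprod_def Pk_def by (intro sets_PiM_cong) auto

lemma space_Pprod: "space (Pprod \<mu> p n \<theta> \<sigma>) = space (Xn \<mu> n)"
  using sets_Pprod by (rule sets_eq_imp_space_eq)

lemma Pprod_prob:
  assumes hp: "\<And>\<theta> k. \<theta> \<in> {0,1} \<Longrightarrow> k \<in> {1..K} \<Longrightarrow>
           p \<theta> k \<in> borel_measurable \<mu> \<and> (\<forall>x\<in>space \<mu>. 0 \<le> p \<theta> k x) \<and> prob_space (Pk \<mu> p \<theta> k)"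
    and s: "\<sigma> \<in> labelings n K \<nu>" and th: "\<theta> \<in> {0,1}"
  shows "prob_space (Pprod \<mu> p n \<theta> \<sigma>)"
  unfolding Pprod_def using hp[OF th lab_range[OF s]] by (intro prob_space_PiM) blast

lemma dens_meas:
  assumes hp: "\<And>\<theta> k. \<theta> \<in> {0,1} \<Longrightarrow> k \<in> {1..K} \<Longrightarrow>
           p \<theta> k \<in> borel_measurable \<mu> \<and> (\<forall>x\<in>space \<mu>. 0 \<le> p \<theta> k x) \<and> prob_space (Pk \<mu> p \<theta> k)"
    and s: "\<sigma> \<in> labelings n K \<nu>" and th: "\<theta> \<in> {0,1}"
  shows "dens p n \<theta> \<sigma> \<in> borel_measurable (Xn \<mu> n)"
proof -
  have "(\<lambda>x. \<Prod>i\<in>{1..n}. p \<theta> (\<sigma> i) (x i)) \<in> borel_measurable (Xn \<mu> n)"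
    using hp[OF th lab_range[OF s]]
    by (intro borel_measurable_prod) (auto intro: measurable_compose[OF measurable_component_singleton])
  then show ?thesis unfolding dens_def[abs_def] .
qed

lemma dens_nonneg:
  assumes hp: "\<And>\<theta> k. \<theta> \<in> {0,1} \<Longrightarrow> k \<in> {1..K} \<Longrightarrow>
           p \<theta> k \<in> borel_measurable \<mu> \<and> (\<forall>x\<in>space \<mu>. 0 \<le> p \<theta> k x) \<and> prob_space (Pk \<mu> p \<theta> k)"
    and s: "\<sigma> \<in> labelings n K \<nu>" and th: "\<theta> \<in> {0,1}" and x: "x \<in> space (Xn \<mu> n)"
  shows "0 \<le> dens p n \<theta> \<sigma> x"
proof -
  have "x i \<in> space \<mu>" if "i \<in> {1..n}" for i using x that by (auto simp: space_PiM)
  then show ?thesis unfolding dens_def using hp[OF th lab_range[OF s]] by (intro prod_nonneg) blast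
qed

lemma Pprod_density:
  assumes sf: "sigma_finite_measure \<mu>"
    and hp: "\<And>\<theta> k. \<theta> \<in> {0,1} \<Longrightarrow> k \<in> {1..K} \<Longrightarrow>
           p \<theta> k \<in> borel_measurable \<mu> \<and> (\<forall>x\<in>space \<mu>. 0 \<le> p \<theta> k x) \<and> prob_space (Pk \<mu> p \<theta> k)"
    and s: "\<sigma> \<in> labelings n K \<nu>" and th: "\<theta> \<in> {0,1}"
  shows "Pprod \<mu> p n \<theta> \<sigma> = density (Xn \<mu> n) (\<lambda>x. ennreal (dens p n \<theta> \<sigma> x))"
  unfolding Pprod_def Pk_def dens_def
  using hp[OF th lab_range[OF s]]
  by (intro PiM_density[OF sf, of "{1..n}" "\<lambda>i. p \<theta> (\<sigma> i)"]) (auto simp: Pk_def)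

lemma Pprod_Tp:
  assumes hp: "\<And>\<theta> k. \<theta> \<in> {0,1} \<Longrightarrow> k \<in> {1..K} \<Longrightarrow>
           p \<theta> k \<in> borel_measurable \<mu> \<and> (\<forall>x\<in>space \<mu>. 0 \<le> p \<theta> k x) \<and> prob_space (Pk \<mu> p \<theta> k)"
    and s: "\<sigma> \<in> labelings n K \<nu>" and th: "\<theta> \<in> {0,1}" and pi: "bij_betw \<pi> {1..n} {1..n}"
  shows "distr (Pprod \<mu> p n \<theta> \<sigma>) (Pprod \<mu> p n \<theta> (Tp n \<pi> \<sigma>)) (\<lambda>\<omega>. \<lambda>m\<in>{1..n}. \<omega> (\<pi> m)) = Pprod \<mu> p n \<theta> (Tp n \<pi> \<sigma>)"
proof -
  have eq: "Pprod \<mu> p n \<theta> (Tp n \<pi> \<sigma>) = PiM {1..n} (\<lambda>i. Pk \<mu> p \<theta> (\<sigma> (\<pi> i)))"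
    unfolding Pprod_def by (intro PiM_cong) (auto simp: Tp_def)
  have "distr (PiM {1..n} (\<lambda>i. Pk \<mu> p \<theta> (\<sigma> i))) (PiM {1..n} (\<lambda>i. Pk \<mu> p \<theta> (\<sigma> (\<pi> i))))
      (\<lambda>\<omega>. \<lambda>m\<in>{1..n}. \<omega> (\<pi> m)) = PiM {1..n} (\<lambda>i. Pk \<mu> p \<theta> (\<sigma> (\<pi> i)))"
    using hp[OF th lab_range[OF s]] pi
    by (intro distr_PiM_reindex[of "{1..n}" "\<lambda>i. Pk \<mu> p \<theta> (\<sigma> i)" \<pi> "{1..n}"])
      (auto simp: bij_betw_def)
  then show ?thesis unfolding eq by (simp add: Pprod_def)
qed

lemma E_Tp:
  fixes g :: "(nat \<Rightarrow> 'a) \<Rightarrow> real"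
  assumes hp: "\<And>\<theta> k. \<theta> \<in> {0,1} \<Longrightarrow> k \<in> {1..K} \<Longrightarrow>
           p \<theta> k \<in> borel_measurable \<mu> \<and> (\<forall>x\<in>space \<mu>. 0 \<le> p \<theta> k x) \<and> prob_space (Pk \<mu> p \<theta> k)"
    and s: "\<sigma> \<in> labelings n K \<nu>" and th: "\<theta> \<in> {0,1}" and pi: "bij_betw \<pi> {1..n} {1..n}"
    and g: "g \<in> borel_measurable (Xn \<mu> n)"
    and ginv: "\<And>x. x \<in> space (Xn \<mu> n) \<Longrightarrow> g (Tp n \<pi> x) = g x"
  shows "integral\<^sup>L (Pprod \<mu> p n \<theta> (Tp n \<pi> \<sigma>)) g = integral\<^sup>L (Pprod \<mu> p n \<theta> \<sigma>) g"
proof -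
  have meas: "(\<lambda>\<omega>. \<lambda>m\<in>{1..n}. \<omega> (\<pi> m)) \<in> measurable (Pprod \<mu> p n \<theta> \<sigma>) (Pprod \<mu> p n \<theta> (Tp n \<pi> \<sigma>))"
      unfolding Pprod_def
      using pi by (intro measurable_restrict) (auto simp: Tp_def bij_betw_def intro!: measurable_component_singleton)
  have g': "g \<in> borel_measurable (Pprod \<mu> p n \<theta> (Tp n \<pi> \<sigma>))"
    using g by (simp add: measurable_cong_sets[OF sets_Pprod refl])
  have "integral\<^sup>L (Pprod \<mu> p n \<theta> (Tp n \<pi> \<sigma>)) g
      = integral\<^sup>L (distr (Pprod \<mu> p n \<theta> \<sigma>) (Pprod \<mu> p n \<theta> (Tp n \<pi> \<sigma>)) (\<lambda>\<omega>. \<lambda>m\<in>{1..n}. \<omega> (\<pi> m))) g"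
    using Pprod_Tp[OF hp s th pi] by simp
  also have "\<dots> = integral\<^sup>L (Pprod \<mu> p n \<theta> \<sigma>) (\<lambda>x. g (\<lambda>m\<in>{1..n}. x (\<pi> m)))"
    using meas g' by (rule integral_distr)
  also have "\<dots> = integral\<^sup>L (Pprod \<mu> p n \<theta> \<sigma>) (\<lambda>x. g (Tp n \<pi> x))"
    by (simp add: Tp_def)
  also have "\<dots> = integral\<^sup>L (Pprod \<mu> p n \<theta> \<sigma>) g"
    by (intro Bochner_Integration.integral_cong refl) (simp add: ginv space_Pprod)
  finally show ?thesis .
qed

lemma E_const:
  fixes g :: "(nat \<Rightarrow> 'a) \<Rightarrow> real"
  assumes hp: "\<And>\<theta> k. \<theta> \<in> {0,1} \<Longrightarrow> k \<in> {1..K} \<Longrightarrow>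
           p \<theta> k \<in> borel_measurable \<mu> \<and> (\<forall>x\<in>space \<mu>. 0 \<le> p \<theta> k x) \<and> prob_space (Pk \<mu> p \<theta> k)"
    and s: "\<sigma> \<in> labelings n K \<nu>" and s': "\<sigma>' \<in> labelings n K \<nu>" and th: "\<theta> \<in> {0,1}"
    and g: "g \<in> borel_measurable (Xn \<mu> n)"
    and ginv: "\<And>\<pi> x. bij_betw \<pi> {1..n} {1..n} \<Longrightarrow> x \<in> space (Xn \<mu> n) \<Longrightarrow> g (Tp n \<pi> x) = g x"
  shows "integral\<^sup>L (Pprod \<mu> p n \<theta> \<sigma>') g = integral\<^sup>L (Pprod \<mu> p n \<theta> \<sigma>) g"
proof -
  obtain \<pi> where pi: "bij_betw \<pi> {1..n} {1..n}" and e: "\<sigma>' = Tp n \<pi> \<sigma>"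
    using labelings_trans[OF s s'] by blast
  show ?thesis unfolding e by (rule E_Tp[OF hp s th pi g ginv[OF pi]])
qed



lemma np_pt:
  fixes a b \<tau> \<gamma> f :: real
  assumes "0 \<le> a" "0 \<le> b" "0 \<le> \<tau>" "0 \<le> f" "f \<le> 1" "0 \<le> \<gamma>" "\<gamma> \<le> 1"
  shows "0 \<le> ((if ennreal \<tau> < ennreal a / ennreal b then 1
          else if ennreal a / ennreal b = ennreal \<tau> then \<gamma> else 0) - f) * (a - \<tau> * b)"
proof (cases "b = 0")
  case True
  show ?thesis
  proof (cases "a = 0")
    case True with \<open>b = 0\<close> show ?thesis by simp
  next
    case False
    then have "ennreal a / ennreal b = top" using True assms by simp
    then show ?thesis using True assms by simp
  qed
next
  case False
  then have b: "0 < b" using assms by simp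
  have d: "ennreal a / ennreal b = ennreal (a / b)" using assms b by (simp add: divide_ennreal)
  have ab: "0 \<le> a / b" using assms b by simp
  consider "\<tau> < a / b" | "a / b = \<tau>" | "a / b < \<tau>" by linarith
  then show ?thesis
  proof cases
    case 1
    then have "ennreal \<tau> < ennreal a / ennreal b" unfolding d using assms by (simp add: ennreal_less_iff)
    moreover have "\<tau> * b < a" using 1 b by (simp add: pos_less_divide_eq)
    ultimately show ?thesis using assms by simp
  next
    case 2
    then have "a = \<tau> * b" using b by (simp add: field_simps)
    then show ?thesis by simp
  next
    case 3
    then have "\<not> ennreal \<tau> < ennreal a / ennreal b" unfolding d using assms by (simp add: ennreal_less_iff)
    moreover have "ennreal a / ennreal b \<noteq> ennreal \<tau>" unfolding d using ennreal_inj[OF ab assms(3)] 3 by simp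
    moreover have "a < \<tau> * b" using 3 b by (simp add: pos_divide_less_eq)
    ultimately show ?thesis using assms by (simp add: mult_nonneg_nonpos)
  qed
qed

lemma Tp_space:
  assumes "bij_betw \<pi> {1..n} {1..n}" "x \<in> space (Xn \<mu> n)"
  shows "Tp n \<pi> x \<in> space (Xn \<mu> n)"
proof -
  have "x (\<pi> i) \<in> space \<mu>" if "i \<in> {1..n}" for i
    using assms that by (auto simp: space_PiM bij_betw_def)
  then show ?thesis by (simp add: space_PiM Tp_def restrict_PiE_iff)
qed

lemma key:
  fixes g :: "(nat \<Rightarrow> 'a) \<Rightarrow> real"
  assumes sf: "sigma_finite_measure \<mu>"
    and hp: "\<And>\<theta> k. \<theta> \<in> {0,1} \<Longrightarrow> k \<in> {1..K} \<Longrightarrow>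
           p \<theta> k \<in> borel_measurable \<mu> \<and> (\<forall>x\<in>space \<mu>. 0 \<le> p \<theta> k x) \<and> prob_space (Pk \<mu> p \<theta> k)"
    and s0: "\<sigma>0 \<in> labelings n K \<nu>" and th: "\<theta> \<in> {0,1}"
    and g: "g \<in> borel_measurable (Xn \<mu> n)"
    and gb: "\<And>x. x \<in> space (Xn \<mu> n) \<Longrightarrow> \<bar>g x\<bar> \<le> 1"
    and ginv: "\<And>\<pi> x. bij_betw \<pi> {1..n} {1..n} \<Longrightarrow> x \<in> space (Xn \<mu> n) \<Longrightarrow> g (Tp n \<pi> x) = g x"
  shows "integrable (Xn \<mu> n) (\<lambda>x. (\<Sum>\<sigma>\<in>labelings n K \<nu>. dens p n \<theta> \<sigma> x) * g x)"
    and "integral\<^sup>L (Xn \<mu> n) (\<lambda>x. (\<Sum>\<sigma>\<in>labelings n K \<nu>. dens p n \<theta> \<sigma> x) * g x)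
          = real (card (labelings n K \<nu>)) * integral\<^sup>L (Pprod \<mu> p n \<theta> \<sigma>0) g"
proof -
  let ?S = "labelings n K \<nu>"
  have each: "integrable (Xn \<mu> n) (\<lambda>x. dens p n \<theta> \<sigma> x * g x)
     \<and> integral\<^sup>L (Xn \<mu> n) (\<lambda>x. dens p n \<theta> \<sigma> x * g x) = integral\<^sup>L (Pprod \<mu> p n \<theta> \<sigma>0) g"
    if s: "\<sigma> \<in> ?S" for \<sigma>
  proof -
    have dm: "dens p n \<theta> \<sigma> \<in> borel_measurable (Xn \<mu> n)" by (rule dens_meas[OF hp s th])
    have dn: "AE x in Xn \<mu> n. 0 \<le> dens p n \<theta> \<sigma> x" using dens_nonneg[OF hp s th] by auto
    have D: "Pprod \<mu> p n \<theta> \<sigma> = density (Xn \<mu> n) (\<lambda>x. ennreal (dens p n \<theta> \<sigma> x))"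
      by (rule Pprod_density[OF sf hp s th])
    interpret P: prob_space "Pprod \<mu> p n \<theta> \<sigma>" by (rule Pprod_prob[OF hp s th])
    have gP: "g \<in> borel_measurable (Pprod \<mu> p n \<theta> \<sigma>)"
      using g by (simp add: measurable_cong_sets[OF sets_Pprod refl])
    have "integrable (Pprod \<mu> p n \<theta> \<sigma>) g"
      using gb by (intro P.integrable_const_bound[where B=1] gP) (auto simp: space_Pprod)
    then have i1: "integrable (Xn \<mu> n) (\<lambda>x. dens p n \<theta> \<sigma> x * g x)"
      unfolding D using integrable_density[OF g dm dn] by simp
    have "integral\<^sup>L (Pprod \<mu> p n \<theta> \<sigma>) g = integral\<^sup>L (Xn \<mu> n) (\<lambda>x. dens p n \<theta> \<sigma> x * g x)"
      unfolding D using integral_density[OF g dm dn] by simp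
    moreover have "integral\<^sup>L (Pprod \<mu> p n \<theta> \<sigma>) g = integral\<^sup>L (Pprod \<mu> p n \<theta> \<sigma>0) g"
      by (rule E_const[OF hp s0 s th g ginv])
    ultimately show ?thesis using i1 by simp
  qed
  have each1: "integrable (Xn \<mu> n) (\<lambda>x. dens p n \<theta> \<sigma> x * g x)" if "\<sigma> \<in> ?S" for \<sigma>
    using each[OF that] by (rule conjunct1)
  have each2: "integral\<^sup>L (Xn \<mu> n) (\<lambda>x. dens p n \<theta> \<sigma> x * g x) = integral\<^sup>L (Pprod \<mu> p n \<theta> \<sigma>0) g" if "\<sigma> \<in> ?S" for \<sigma>
    using each[OF that] by (rule conjunct2)
  have eq: "(\<lambda>x. (\<Sum>\<sigma>\<in>?S. dens p n \<theta> \<sigma> x) * g x) = (\<lambda>x. \<Sum>\<sigma>\<in>?S. dens p n \<theta> \<sigma> x * g x)"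
    by (simp add: sum_distrib_right)
  show "integrable (Xn \<mu> n) (\<lambda>x. (\<Sum>\<sigma>\<in>?S. dens p n \<theta> \<sigma> x) * g x)"
    unfolding eq by (rule Bochner_Integration.integrable_sum) (rule each1)
  have "integral\<^sup>L (Xn \<mu> n) (\<lambda>x. \<Sum>\<sigma>\<in>?S. dens p n \<theta> \<sigma> x * g x)
      = (\<Sum>\<sigma>\<in>?S. integral\<^sup>L (Xn \<mu> n) (\<lambda>x. dens p n \<theta> \<sigma> x * g x))"
    by (rule Bochner_Integration.integral_sum) (rule each1)
  also have "\<dots> = (\<Sum>\<sigma>\<in>?S. integral\<^sup>L (Pprod \<mu> p n \<theta> \<sigma>0) g)"
    by (rule sum.cong[OF refl]) (rule each2)
  finally show "integral\<^sup>L (Xn \<mu> n) (\<lambda>x. (\<Sum>\<sigma>\<in>?S. dens p n \<theta> \<sigma> x) * g x)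
          = real (card ?S) * integral\<^sup>L (Pprod \<mu> p n \<theta> \<sigma>0) g"
    unfolding eq by simp
qed

lemma Max_const_image:
  assumes "s0 \<in> S" "\<And>s. s \<in> S \<Longrightarrow> f s = f s0"
  shows "Max (f ` S) = f s0"
proof -
  have "f ` S = {f s0}" using assms by (intro equalityI subsetI) (blast, blast)
  then show ?thesis by simp
qed



lemma E_one_minus:
  fixes g :: "(nat \<Rightarrow> 'a) \<Rightarrow> real"
  assumes P: "prob_space M" and g: "g \<in> borel_measurable M" and gb: "\<And>x. x \<in> space M \<Longrightarrow> \<bar>g x\<bar> \<le> 1"
  shows "integral\<^sup>L M (\<lambda>x. 1 - g x) = 1 - integral\<^sup>L M g"
proof -
  interpret prob_space M by (rule P)
  have ig: "integrable M g" using gb by (intro integrable_const_bound[where B=1] g) auto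
  have "integral\<^sup>L M (\<lambda>x. 1 - g x) = integral\<^sup>L M (\<lambda>x. 1) - integral\<^sup>L M g"
    by (rule Bochner_Integration.integral_diff[OF integrable_const ig])
  then show ?thesis by (simp add: prob_space)
qed

theorem lemma1:
  fixes \<mu> :: "'a::linorder measure"
    and p :: "nat \<Rightarrow> nat \<Rightarrow> 'a \<Rightarrow> real"
    and n K :: nat and \<nu> :: "nat \<Rightarrow> real" and \<tau> \<gamma> :: real
    and \<phi> :: "(nat \<Rightarrow> 'a) \<Rightarrow> real"
  assumes "n \<ge> 1"
    and "sigma_finite_measure \<mu>"
    and "\<And>\<theta> k. \<theta> \<in> {0,1} \<Longrightarrow> k \<in> {1..K} \<Longrightarrow>
           p \<theta> k \<in> borel_measurable \<mu> \<and> (\<forall>x\<in>space \<mu>. 0 \<le> p \<theta> k x) \<and> prob_space (Pk \<mu> p \<theta> k)"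
    and "labelings n K \<nu> \<noteq> {}"
    and "\<tau> \<ge> 0" and "0 \<le> \<gamma>" and "\<gamma> \<le> 1"
    and "symmetric_test \<mu> n \<phi>"
    and "PF \<mu> p n K \<nu> \<phi> \<le> PF \<mu> p n K \<nu> (mlr_test p n K \<nu> \<tau> \<gamma>)"
  shows "PM \<mu> p n K \<nu> \<phi> \<ge> PM \<mu> p n K \<nu> (mlr_test p n K \<nu> \<tau> \<gamma>)"
proof -
  let ?S = "labelings n K \<nu>"
  let ?X = "Xn \<mu> n"
  note sf = assms(2) and hp = assms(3)
  define \<psi> where "\<psi> = mlr_test p n K \<nu> \<tau> \<gamma>"
  obtain \<sigma>0 where s0: "\<sigma>0 \<in> ?S" using assms(4) by blast
  have th0: "(0::nat) \<in> {0,1}" and th1: "(1::nat) \<in> {0,1}" by auto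
  define F where "F \<theta> = (\<lambda>x. \<Sum>\<sigma>\<in>?S. dens p n \<theta> \<sigma> x)" for \<theta>
  have Fm: "F \<theta> \<in> borel_measurable ?X" if th: "\<theta> \<in> {0,1}" for \<theta>
    unfolding F_def using dens_meas[OF hp _ th] by (intro borel_measurable_sum) auto
  have Fnn: "0 \<le> F \<theta> x" if th: "\<theta> \<in> {0,1}" and x: "x \<in> space ?X" for \<theta> x
    unfolding F_def using dens_nonneg[OF hp _ th x] by (intro sum_nonneg) auto
  obtain \<phi>t where phim: "\<phi> \<in> borel_measurable ?X"
    and phib: "\<And>x. x \<in> space ?X \<Longrightarrow> 0 \<le> \<phi> x \<and> \<phi> x \<le> 1"
    and phit: "\<And>x. x \<in> space ?X \<Longrightarrow> \<phi> x = \<phi>t (ordmap n x)"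
    using assms(8) unfolding symmetric_test_def is_test_def by blast
  have phiinv: "\<phi> (Tp n \<pi> x) = \<phi> x" if pi: "bij_betw \<pi> {1..n} {1..n}" and x: "x \<in> space ?X" for \<pi> x
  proof -
    have o: "ordmap n (Tp n \<pi> x) = ordmap n x" by (rule ordmap_Tp[OF pi])
    show ?thesis unfolding phit[OF Tp_space[OF pi x]] phit[OF x] o ..
  qed
  have psi_eq: "\<psi> x = (if ennreal \<tau> < ennreal (F 1 x) / ennreal (F 0 x) then 1
      else if ennreal (F 1 x) / ennreal (F 0 x) = ennreal \<tau> then \<gamma> else 0)" for x
    by (simp add: \<psi>_def mlr_test_def mlr_def F_def)
  have psim: "\<psi> \<in> borel_measurable ?X"
  proof -
    note [measurable] = Fm[OF th0] Fm[OF th1]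
    have "(\<lambda>x. if ennreal \<tau> < ennreal (F 1 x) / ennreal (F 0 x) then 1
      else if ennreal (F 1 x) / ennreal (F 0 x) = ennreal \<tau> then \<gamma> else (0::real)) \<in> borel_measurable ?X"
      by measurable
    then show ?thesis by (simp add: psi_eq[abs_def])
  qed
  have psib: "0 \<le> \<psi> x \<and> \<psi> x \<le> 1" for x using assms(6,7) by (simp add: psi_eq)
  have psiinv: "\<psi> (Tp n \<pi> x) = \<psi> x" if pi: "bij_betw \<pi> {1..n} {1..n}" for \<pi> x
    unfolding \<psi>_def by (rule mlr_test_Tp[OF pi])
  have phiabs: "\<bar>\<phi> x\<bar> \<le> 1" if "x \<in> space ?X" for x using phib[OF that] by simp
  have psiabs: "\<bar>\<psi> x\<bar> \<le> 1" for x using psib[of x] by simp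
  note k0phi = key[OF sf hp s0 th0 phim phiabs phiinv]
  note k1phi = key[OF sf hp s0 th1 phim phiabs phiinv]
  note k0psi = key[OF sf hp s0 th0 psim psiabs psiinv]
  note k1psi = key[OF sf hp s0 th1 psim psiabs psiinv]
  define N where "N = real (card ?S)"
  have Npos: "0 < N" unfolding N_def using s0 labelings_finite card_gt_0_iff by fastforce
  define e where "e \<theta> (g :: (nat \<Rightarrow> 'a) \<Rightarrow> real) = integral\<^sup>L (Pprod \<mu> p n \<theta> \<sigma>0) g" for \<theta> g
  have PFe: "PF \<mu> p n K \<nu> g = e 0 g"
    if gm: "g \<in> borel_measurable ?X" and ginv: "\<And>\<pi> x. bij_betw \<pi> {1..n} {1..n} \<Longrightarrow> x \<in> space ?X \<Longrightarrow> g (Tp n \<pi> x) = g x" for g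
    unfolding PF_def e_def
    by (rule Max_const_image[OF s0]) (rule E_const[OF hp s0 _ th0 gm ginv])
  have PMe: "PM \<mu> p n K \<nu> g = 1 - e 1 g"
    if gm: "g \<in> borel_measurable ?X" and ginv: "\<And>\<pi> x. bij_betw \<pi> {1..n} {1..n} \<Longrightarrow> x \<in> space ?X \<Longrightarrow> g (Tp n \<pi> x) = g x"
      and gb: "\<And>x. x \<in> space ?X \<Longrightarrow> \<bar>g x\<bar> \<le> 1" for g
  proof -
    have gm': "(\<lambda>x. 1 - g x) \<in> borel_measurable ?X" using gm by measurable
    have ginv': "(\<lambda>x. 1 - g x) (Tp n \<pi> x) = (\<lambda>x. 1 - g x) x"
      if "bij_betw \<pi> {1..n} {1..n}" "x \<in> space ?X" for \<pi> x using ginv[OF that] by simp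
    have "PM \<mu> p n K \<nu> g = integral\<^sup>L (Pprod \<mu> p n 1 \<sigma>0) (\<lambda>x. 1 - g x)"
      unfolding PM_def
      by (rule Max_const_image[OF s0]) (rule E_const[OF hp s0 _ th1 gm' ginv'])
    also have "\<dots> = 1 - e 1 g" unfolding e_def
      using gm gb by (intro E_one_minus Pprod_prob[OF hp s0 th1])
        (auto simp: measurable_cong_sets[OF sets_Pprod refl] space_Pprod)
    finally show ?thesis .
  qed
  have PFphi: "PF \<mu> p n K \<nu> \<phi> = e 0 \<phi>" by (rule PFe[OF phim phiinv])
  have PFpsi: "PF \<mu> p n K \<nu> \<psi> = e 0 \<psi>" by (rule PFe[OF psim psiinv])
  have PMphi: "PM \<mu> p n K \<nu> \<phi> = 1 - e 1 \<phi>" by (rule PMe[OF phim phiinv phiabs])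
  have PMpsi: "PM \<mu> p n K \<nu> \<psi> = 1 - e 1 \<psi>" by (rule PMe[OF psim psiinv psiabs])
  have hyp: "e 0 \<phi> \<le> e 0 \<psi>" using assms(9) unfolding \<psi>_def[symmetric] PFphi PFpsi .
  have pt: "0 \<le> (\<psi> x - \<phi> x) * (F 1 x - \<tau> * F 0 x)" if x: "x \<in> space ?X" for x
    unfolding psi_eq
    using np_pt[OF Fnn[OF th1 x] Fnn[OF th0 x] assms(5) _ _ assms(6,7), of "\<phi> x"] phib[OF x] by blast
  have i1psi: "integrable ?X (\<lambda>x. F 1 x * \<psi> x)" using k1psi(1) by (simp add: F_def)
  have i1phi: "integrable ?X (\<lambda>x. F 1 x * \<phi> x)" using k1phi(1) by (simp add: F_def)
  have i0psi: "integrable ?X (\<lambda>x. F 0 x * \<psi> x)" using k0psi(1) by (simp add: F_def)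
  have i0phi: "integrable ?X (\<lambda>x. F 0 x * \<phi> x)" using k0phi(1) by (simp add: F_def)
  have v1psi: "integral\<^sup>L ?X (\<lambda>x. F 1 x * \<psi> x) = N * e 1 \<psi>" using k1psi(2) by (simp add: F_def N_def e_def)
  have v1phi: "integral\<^sup>L ?X (\<lambda>x. F 1 x * \<phi> x) = N * e 1 \<phi>" using k1phi(2) by (simp add: F_def N_def e_def)
  have v0psi: "integral\<^sup>L ?X (\<lambda>x. F 0 x * \<psi> x) = N * e 0 \<psi>" using k0psi(2) by (simp add: F_def N_def e_def)
  have v0phi: "integral\<^sup>L ?X (\<lambda>x. F 0 x * \<phi> x) = N * e 0 \<phi>" using k0phi(2) by (simp add: F_def N_def e_def)
  have "0 \<le> integral\<^sup>L ?X (\<lambda>x. (\<psi> x - \<phi> x) * (F 1 x - \<tau> * F 0 x))"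
    using pt by (intro integral_nonneg_AE AE_I2) blast
  also have "(\<lambda>x. (\<psi> x - \<phi> x) * (F 1 x - \<tau> * F 0 x))
      = (\<lambda>x. (F 1 x * \<psi> x - F 1 x * \<phi> x) - \<tau> * (F 0 x * \<psi> x - F 0 x * \<phi> x))"
    by (auto simp: algebra_simps)
  also have "integral\<^sup>L ?X \<dots> = (N * e 1 \<psi> - N * e 1 \<phi>) - \<tau> * (N * e 0 \<psi> - N * e 0 \<phi>)"
    using i1psi i1phi i0psi i0phi v1psi v1phi v0psi v0phi by simp
  finally have "0 \<le> N * (e 1 \<psi> - e 1 \<phi>) - \<tau> * N * (e 0 \<psi> - e 0 \<phi>)"
    by (simp add: algebra_simps)
  moreover have "0 \<le> \<tau> * N * (e 0 \<psi> - e 0 \<phi>)" using assms(5) Npos hyp by simp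
  ultimately have "0 \<le> N * (e 1 \<psi> - e 1 \<phi>)" by linarith
  then have "e 1 \<phi> \<le> e 1 \<psi>" using Npos by (simp add: zero_le_mult_iff)
  then show ?thesis unfolding \<psi>_def[symmetric] PMphi PMpsi by simp
qed

end
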